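(* Let $x\in\mathbb{Z}^2$ and let $(S_n^{(1)})_{n\in\mathbb{N}}$ and $(S_n^{(2)})_{n\in\mathbb{N}}$ be two independent random walks in $\mathbb{Z}^2$ with the same law, each starting at $x$. That is, $S_0^{(i)}=x$ and $S_n^{(i)}=x+X_1^{(i)}+\cdots+X_n^{(i)}$ for $n\ge 1$ and $i=1,2$, where the sequences $(X_k^{(1)})_{k\ge1}$ and $(X_k^{(2)})_{k\ge1}$ are independent of each other, and each consists of i.i.d. $\mathbb{Z}^2$-valued random variables with one and the same common law $\mu$. Assume the walks are square integrable, i.e. $\mathbb{E}\big(\|X_1^{(1)}\|_2^2\big)<\infty$, where $\|\cdot\|_2$ is the Euclidean norm. Then, with probability one, $S_n^{(1)}=S_n^{(2)}$ for infinitely many $n\in\mathbb{N}$.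
   Context: A random walk in $\mathbb{Z}^2$ starting at $x\in\mathbb{Z}^2$ is a sequence $S_0=x$, $S_n=x+X_1+\cdots+X_n$, where $(X_n)_{n\ge1}$ are i.i.d. $\mathbb{Z}^2$-valued random variables. It is called square integrable if $\mathbb{E}(\|X_1\|_2^2)<\infty$. Two walks are identically distributed when they have the same starting point and the same step law. *)

theory Defs
  imports "HOL-Probability.Probability"
begin

definition walk :: "int \<times> int \<Rightarrow> (nat \<Rightarrow> 'a \<Rightarrow> int \<times> int) \<Rightarrow> nat \<Rightarrow> 'a \<Rightarrow> int \<times> int" where
  "walk x X n \<omega> = (fst x + (\<Sum>k\<in>{1..n}. fst (X k \<omega>)), snd x + (\<Sum>k\<in>{1..n}. snd (X k \<omega>)))"

definition sqnorm2 :: "int \<times> int \<Rightarrow> real" where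
  "sqnorm2 v = real_of_int (fst v) ^ 2 + real_of_int (snd v) ^ 2"

end

theory Submission
  imports Defs
begin

lemma PiM_count_sets:
  fixes J :: "'i set"
  assumes "finite J" "A \<subseteq> space (PiM J (\<lambda>_. count_space (UNIV :: 'b::countable set)))"
  shows "A \<in> sets (PiM J (\<lambda>_. count_space (UNIV :: 'b set)))"
proof -
  have sp: "space (PiM J (\<lambda>_. count_space (UNIV :: 'b set))) = PiE J (\<lambda>_. UNIV)"
    by (simp add: space_PiM)
  have cA: "countable A"
    using assms(2) countable_PiE[OF assms(1), of "\<lambda>_. UNIV :: 'b set"] sp
    by (metis countable_subset countableI_type)
  have "A = (\<Union>f\<in>A. PiE J (\<lambda>j. {f j}))"
  proof -
    have "f \<in> A \<Longrightarrow> PiE J (\<lambda>j. {f j}) = {f}" for f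
      using assms(2) sp by (intro PiE_singleton) (auto simp: PiE_def)
    then show ?thesis by auto
  qed
  also have "\<dots> \<in> sets (PiM J (\<lambda>_. count_space (UNIV :: 'b set)))"
    using cA assms(1) by (intro sets.countable_UN'' sets_PiM_I_finite) auto
  finally show ?thesis .
qed

locale rw = prob_space M for M :: "'a measure" +
  fixes x :: "int \<times> int" and X1 X2 :: "nat \<Rightarrow> 'a \<Rightarrow> int \<times> int" and \<mu> :: "(int \<times> int) measure"
  assumes indep: "indep_vars (\<lambda>_. count_space UNIV) (\<lambda>(b, k). if b then X1 k else X2 k) {(b, k). k \<ge> 1}"
    and d1: "\<And>k. k \<ge> 1 \<Longrightarrow> distr M (count_space UNIV) (X1 k) = \<mu>"
    and d2: "\<And>k. k \<ge> 1 \<Longrightarrow> distr M (count_space UNIV) (X2 k) = \<mu>"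
    and int1: "integrable M (\<lambda>\<omega>. sqnorm2 (X1 1 \<omega>))"
begin

definition V :: "bool \<times> nat \<Rightarrow> 'a \<Rightarrow> int \<times> int" where
  "V = (\<lambda>(b, k). if b then X1 k else X2 k)"
definition I :: "(bool \<times> nat) set" where "I = {(b, k). k \<ge> 1}"

lemma indepV: "indep_vars (\<lambda>_. count_space UNIV) V I"
  using indep unfolding V_def I_def .

lemma measV: "i \<in> I \<Longrightarrow> V i \<in> measurable M (count_space UNIV)"
  using indepV unfolding indep_vars_def by auto

lemma distrV: "i \<in> I \<Longrightarrow> distr M (count_space UNIV) (V i) = \<mu>"
  using d1 d2 by (auto simp: V_def I_def)

lemma reindex_indep:
  assumes "inj_on h J" "h ` J \<subseteq> I"
  shows "indep_vars (\<lambda>_. count_space UNIV) (\<lambda>j. V (h j)) J"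
proof -
  have "indep_vars (\<lambda>j. PiM {h j} (\<lambda>_. count_space UNIV)) (\<lambda>j \<omega>. restrict (\<lambda>i. V i \<omega>) {h j}) J"
    using assms by (intro indep_vars_restrict[OF indepV]) (auto simp: disjoint_family_on_def inj_on_def)
  then have "indep_vars (\<lambda>_. count_space UNIV) (\<lambda>j \<omega>. (\<lambda>f. f (h j)) (restrict (\<lambda>i. V i \<omega>) {h j})) J"
    by (rule indep_vars_compose2) (rule measurable_component_singleton, simp)
  then show ?thesis by simp
qed

lemma law:
  fixes J :: "'j set"
  assumes "finite J" "J \<noteq> {}" "inj_on h J" "h ` J \<subseteq> I"
    and S: "S \<subseteq> space (PiM J (\<lambda>_. count_space UNIV))"
  shows "prob {\<omega> \<in> space M. (\<lambda>j\<in>J. V (h j) \<omega>) \<in> S} = measure (PiM J (\<lambda>_. \<mu>)) S"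
proof -
  define W where "W j = (if j \<in> J then V (h j) else (\<lambda>_. (0::int,0::int)))" for j
  have rv: "random_variable (count_space UNIV) (W j)" for j
    using assms(4) by (cases "j \<in> J") (auto simp: W_def intro!: measV)
  have iW: "indep_vars (\<lambda>_. count_space UNIV) W J"
    using reindex_indep[OF assms(3,4)] by (rule indep_vars_cong[THEN iffD1, rotated -1]) (auto simp: W_def)
  have "distr M (PiM J (\<lambda>_. count_space UNIV)) (\<lambda>\<omega>. \<lambda>j\<in>J. W j \<omega>) = PiM J (\<lambda>j. distr M (count_space UNIV) (W j))"
    using indep_vars_iff_distr_eq_PiM[OF assms(2) rv] iW by simp
  also have "\<dots> = PiM J (\<lambda>_. \<mu>)"
    using assms(4) by (intro PiM_cong) (auto simp: W_def image_subset_iff intro!: distrV)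
  finally have D: "distr M (PiM J (\<lambda>_. count_space UNIV)) (\<lambda>\<omega>. \<lambda>j\<in>J. V (h j) \<omega>) = PiM J (\<lambda>_. \<mu>)"
    by (simp add: W_def cong: restrict_cong)
  have mr: "(\<lambda>\<omega>. \<lambda>j\<in>J. V (h j) \<omega>) \<in> measurable M (PiM J (\<lambda>_. count_space UNIV))"
    using assms(4) by (intro measurable_restrict) (auto simp: image_subset_iff intro!: measV)
  have "measure (PiM J (\<lambda>_. \<mu>)) S = measure M ((\<lambda>\<omega>. \<lambda>j\<in>J. V (h j) \<omega>) -` S \<inter> space M)"
    unfolding D[symmetric] using mr PiM_count_sets[OF assms(1) S] by (rule measure_distr)
  then show ?thesis by (auto intro: arg_cong[where f="measure M"])
qed

lemma ev_sets:
  assumes "finite J" "J \<subseteq> I"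
  shows "{\<omega> \<in> space M. P (\<lambda>i\<in>J. V i \<omega>)} \<in> events"
proof -
  have mr: "(\<lambda>\<omega>. \<lambda>j\<in>J. V j \<omega>) \<in> measurable M (PiM J (\<lambda>_. count_space UNIV))"
    using assms by (intro measurable_restrict measV) auto
  have "(\<lambda>\<omega>. \<lambda>j\<in>J. V j \<omega>) -` {f \<in> space (PiM J (\<lambda>_. count_space UNIV)). P f} \<inter> space M \<in> events"
    by (rule measurable_sets[OF mr PiM_count_sets[OF assms(1)]]) auto
  also have "(\<lambda>\<omega>. \<lambda>j\<in>J. V j \<omega>) -` {f \<in> space (PiM J (\<lambda>_. count_space UNIV)). P f} \<inter> space M
     = {\<omega> \<in> space M. P (\<lambda>i\<in>J. V i \<omega>)}"
    using measurable_space[OF mr] by auto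
  finally show ?thesis .
qed

lemma ind_events:
  assumes "finite A" "finite B" "A \<inter> B = {}" "A \<subseteq> I" "B \<subseteq> I"
  shows "prob {\<omega> \<in> space M. P (\<lambda>i\<in>A. V i \<omega>) \<and> Q (\<lambda>i\<in>B. V i \<omega>)}
     = prob {\<omega> \<in> space M. P (\<lambda>i\<in>A. V i \<omega>)} * prob {\<omega> \<in> space M. Q (\<lambda>i\<in>B. V i \<omega>)}"
proof -
  let ?SA = "{f \<in> space (PiM A (\<lambda>_. count_space UNIV)). P f}"
  let ?SB = "{f \<in> space (PiM B (\<lambda>_. count_space UNIV)). Q f}"
  have iv: "indep_var (PiM A (\<lambda>_. count_space UNIV)) (\<lambda>\<omega>. restrict (\<lambda>i. V i \<omega>) A)
      (PiM B (\<lambda>_. count_space UNIV)) (\<lambda>\<omega>. restrict (\<lambda>i. V i \<omega>) B)"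
    using assms by (intro indep_var_restrict[OF indepV]) auto
  have mA: "(\<lambda>\<omega>. \<lambda>j\<in>A. V j \<omega>) \<in> measurable M (PiM A (\<lambda>_. count_space UNIV))"
    using assms by (intro measurable_restrict measV) auto
  have mB: "(\<lambda>\<omega>. \<lambda>j\<in>B. V j \<omega>) \<in> measurable M (PiM B (\<lambda>_. count_space UNIV))"
    using assms by (intro measurable_restrict measV) auto
  have "prob ((\<lambda>\<omega>. (restrict (\<lambda>i. V i \<omega>) A, restrict (\<lambda>i. V i \<omega>) B)) -` (?SA \<times> ?SB) \<inter> space M)
    = prob ((\<lambda>\<omega>. restrict (\<lambda>i. V i \<omega>) A) -` ?SA \<inter> space M) * prob ((\<lambda>\<omega>. restrict (\<lambda>i. V i \<omega>) B) -` ?SB \<inter> space M)"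
    by (rule indep_varD[OF iv]) (auto intro!: PiM_count_sets assms)
  moreover have "(\<lambda>\<omega>. (restrict (\<lambda>i. V i \<omega>) A, restrict (\<lambda>i. V i \<omega>) B)) -` (?SA \<times> ?SB) \<inter> space M
      = {\<omega> \<in> space M. P (\<lambda>i\<in>A. V i \<omega>) \<and> Q (\<lambda>i\<in>B. V i \<omega>)}"
    using measurable_space[OF mA] measurable_space[OF mB] by auto
  moreover have "(\<lambda>\<omega>. restrict (\<lambda>i. V i \<omega>) A) -` ?SA \<inter> space M = {\<omega> \<in> space M. P (\<lambda>i\<in>A. V i \<omega>)}"
    using measurable_space[OF mA] by auto
  moreover have "(\<lambda>\<omega>. restrict (\<lambda>i. V i \<omega>) B) -` ?SB \<inter> space M = {\<omega> \<in> space M. Q (\<lambda>i\<in>B. V i \<omega>)}"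
    using measurable_space[OF mB] by auto
  ultimately show ?thesis by simp
qed

end

definition eqs :: "(bool \<times> nat \<Rightarrow> int \<times> int) \<Rightarrow> nat \<Rightarrow> nat \<Rightarrow> bool" where
  "eqs f a j \<longleftrightarrow> (\<Sum>i\<in>{a<..j}. fst (f (True, i))) = (\<Sum>i\<in>{a<..j}. fst (f (False, i)))
      \<and> (\<Sum>i\<in>{a<..j}. snd (f (True, i))) = (\<Sum>i\<in>{a<..j}. snd (f (False, i)))"

lemma eqs_cong:
  assumes "\<And>b i. a < i \<Longrightarrow> i \<le> j \<Longrightarrow> f (b, i) = g (b, i)"
  shows "eqs f a j = eqs g a j"
proof -
  have h: "(\<Sum>i\<in>{a<..j}. \<phi> (f (b, i))) = (\<Sum>i\<in>{a<..j}. \<phi> (g (b, i)))" for b and \<phi> :: "int \<times> int \<Rightarrow> int"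
    using assms by (intro sum.cong) auto
  show ?thesis unfolding eqs_def by (simp add: h[where \<phi>=fst] h[where \<phi>=snd])
qed

lemma sum_split_gtAM:
  fixes g :: "nat \<Rightarrow> int"
  assumes "a \<le> k" "k \<le> j"
  shows "(\<Sum>i\<in>{a<..j}. g i) = (\<Sum>i\<in>{a<..k}. g i) + (\<Sum>i\<in>{k<..j}. g i)"
proof -
  have "{a<..j} = {a<..k} \<union> {k<..j}" using assms by auto
  then show ?thesis by (simp add: sum.union_disjoint ivl_disj_int)
qed

lemma eqs_trans:
  assumes "a \<le> k" "k \<le> j" "eqs f a k"
  shows "eqs f a j = eqs f k j"
  using assms unfolding eqs_def by (simp add: sum_split_gtAM[OF assms(1,2)])

lemma sum_shift_gtAM:
  fixes g :: "nat \<Rightarrow> int"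
  shows "(\<Sum>i\<in>{k<..k+j}. g i) = (\<Sum>i\<in>{0<..j}. g (i + k))"
proof -
  have "(\<lambda>i. i + k) ` {0<..j} = {k<..k+j}"
  proof
    show "{k<..k+j} \<subseteq> (\<lambda>i. i + k) ` {0<..j}"
    proof
      fix y assume "y \<in> {k<..k+j}"
      then show "y \<in> (\<lambda>i. i + k) ` {0<..j}" by (intro image_eqI[of _ _ "y - k"]) auto
    qed
  qed auto
  moreover have "inj_on (\<lambda>i. i + k) {0<..j}" by (auto simp: inj_on_def)
  ultimately show ?thesis using sum.reindex[of "\<lambda>i. i + k" "{0<..j}" g] by (simp add: comp_def)
qed

lemma eqs_shift: "eqs f k (k + j) = eqs (\<lambda>p. f (fst p, snd p + k)) 0 j"
  unfolding eqs_def by (simp add: sum_shift_gtAM)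

context rw
begin

lemma walk_eqs: "walk x X1 n \<omega> = walk x X2 n \<omega> \<longleftrightarrow> eqs (\<lambda>p. V p \<omega>) 0 n"
proof -
  have "{0<..n} = {1..n}" by auto
  then show ?thesis unfolding walk_def eqs_def V_def by (auto simp: prod_eq_iff)
qed

definition Aset :: "nat \<Rightarrow> (bool \<times> nat) set" where "Aset n = {p. 0 < snd p \<and> snd p \<le> n}"

lemma Aset_finite: "finite (Aset n)"
proof -
  have "Aset n \<subseteq> UNIV \<times> {..n}" by (auto simp: Aset_def)
  then show ?thesis by (rule finite_subset) auto
qed

lemma Aset_I: "Aset n \<subseteq> I" by (auto simp: Aset_def I_def)

definition Ev :: "nat \<Rightarrow> 'a set" where "Ev n = {\<omega> \<in> space M. eqs (\<lambda>p. V p \<omega>) 0 n}"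

lemma ev_sets_eqs:
  assumes "\<And>f g. (\<And>p. p \<in> Aset n \<Longrightarrow> f p = g p) \<Longrightarrow> P f = P g"
  shows "{\<omega> \<in> space M. P (\<lambda>p. V p \<omega>)} \<in> events"
proof -
  have e: "P (\<lambda>p. V p \<omega>) = P (\<lambda>p\<in>Aset n. V p \<omega>)" for \<omega> by (rule assms) simp
  have "{\<omega> \<in> space M. P (\<lambda>p. V p \<omega>)} = {\<omega> \<in> space M. P (\<lambda>p\<in>Aset n. V p \<omega>)}"
    by (simp only: e)
  also have "\<dots> \<in> events" by (rule ev_sets[OF Aset_finite Aset_I])
  finally show ?thesis .
qed

lemma Ev_sets: "Ev n \<in> events"
  unfolding Ev_def by (rule ev_sets_eqs[of n]) (rule eqs_cong, auto simp: Aset_def)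

definition q :: "nat \<Rightarrow> real" where
  "q m = prob {\<omega> \<in> space M. \<forall>j\<in>{0<..m}. \<not> eqs (\<lambda>p. V p \<omega>) 0 j}"

lemma F1:
  "prob {\<omega> \<in> space M. eqs (\<lambda>p. V p \<omega>) 0 k \<and> (\<forall>j\<in>{k<..k+m}. \<not> eqs (\<lambda>p. V p \<omega>) k j)}
    = prob (Ev k) * q m"
proof (cases "m = 0")
  case True
  then show ?thesis by (simp add: Ev_def q_def prob_space)
next
  case False
  define B :: "(bool \<times> nat) set" where "B = {p. k < snd p \<and> snd p \<le> k + m}"
  define J0 where "J0 = Aset m"
  define h where "h = (\<lambda>p::bool \<times> nat. (fst p, snd p + k))"
  define Q' where "Q' = (\<lambda>g. \<forall>j\<in>{0<..m}. \<not> eqs g 0 j)"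
  have finB: "finite B"
  proof -
    have "B \<subseteq> UNIV \<times> {..k+m}" by (auto simp: B_def)
    then show ?thesis by (rule finite_subset) auto
  qed
  have BI: "B \<subseteq> I" by (auto simp: B_def I_def)
  have dis: "Aset k \<inter> B = {}" by (auto simp: B_def Aset_def)
  have e1: "{\<omega> \<in> space M. eqs (\<lambda>p. V p \<omega>) 0 k \<and> (\<forall>j\<in>{k<..k+m}. \<not> eqs (\<lambda>p. V p \<omega>) k j)}
     = {\<omega> \<in> space M. eqs (\<lambda>p\<in>Aset k. V p \<omega>) 0 k \<and> (\<forall>j\<in>{k<..k+m}. \<not> eqs (\<lambda>p\<in>B. V p \<omega>) k j)}"
  proof -
    have "eqs (\<lambda>p\<in>Aset k. V p \<omega>) 0 k = eqs (\<lambda>p. V p \<omega>) 0 k" for \<omega>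
      by (rule eqs_cong) (auto simp: Aset_def)
    moreover have "j \<in> {k<..k+m} \<Longrightarrow> eqs (\<lambda>p\<in>B. V p \<omega>) k j = eqs (\<lambda>p. V p \<omega>) k j" for \<omega> j
      by (rule eqs_cong) (auto simp: B_def)
    ultimately show ?thesis by auto
  qed
  have e2: "prob {\<omega> \<in> space M. eqs (\<lambda>p\<in>Aset k. V p \<omega>) 0 k \<and> (\<forall>j\<in>{k<..k+m}. \<not> eqs (\<lambda>p\<in>B. V p \<omega>) k j)} = prob {\<omega> \<in> space M. eqs (\<lambda>p\<in>Aset k. V p \<omega>) 0 k}
      * prob {\<omega> \<in> space M. (\<forall>j\<in>{k<..k+m}. \<not> eqs (\<lambda>p\<in>B. V p \<omega>) k j)}"
    by (rule ind_events[OF Aset_finite finB dis Aset_I BI])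
  have e3: "prob {\<omega> \<in> space M. eqs (\<lambda>p\<in>Aset k. V p \<omega>) 0 k} = prob (Ev k)"
  proof -
    have "eqs (\<lambda>p\<in>Aset k. V p \<omega>) 0 k = eqs (\<lambda>p. V p \<omega>) 0 k" for \<omega>
      by (rule eqs_cong) (auto simp: Aset_def)
    then show ?thesis by (simp add: Ev_def)
  qed
  have e4: "{\<omega> \<in> space M. (\<forall>j\<in>{k<..k+m}. \<not> eqs (\<lambda>p\<in>B. V p \<omega>) k j)}
      = {\<omega> \<in> space M. Q' (\<lambda>p\<in>J0. V (h p) \<omega>)}"
  proof -
    have "(\<forall>j\<in>{k<..k+m}. \<not> eqs (\<lambda>p\<in>B. V p \<omega>) k j) = Q' (\<lambda>p\<in>J0. V (h p) \<omega>)" for \<omega>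
    proof -
      have "(\<forall>j\<in>{k<..k+m}. \<not> eqs (\<lambda>p\<in>B. V p \<omega>) k j) = (\<forall>j\<in>{0<..m}. \<not> eqs (\<lambda>p\<in>B. V p \<omega>) k (k + j))"
        apply (rule iffI)
         apply auto[1]
        apply clarify
        subgoal for j by (drule bspec[of _ _ "j - k"]) auto
        done
      also have "\<dots> = Q' (\<lambda>p\<in>J0. V (h p) \<omega>)"
        unfolding Q'_def eqs_shift
        by (intro ball_cong refl arg_cong[where f=Not] eqs_cong)
           (auto simp: B_def J0_def Aset_def h_def)
      finally show ?thesis .
    qed
    then show ?thesis by auto
  qed
  have e5: "prob {\<omega> \<in> space M. Q' (\<lambda>p\<in>J0. V (h p) \<omega>)} = q m"
  proof -
    have fJ: "finite J0" "J0 \<noteq> {}" using Aset_finite False by (auto simp: J0_def Aset_def intro!: exI[of _ "(True,1)"])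
    have S: "{g \<in> space (PiM J0 (\<lambda>_. count_space UNIV)). Q' g} \<subseteq> space (PiM J0 (\<lambda>_. count_space UNIV))" by auto
    have "prob {\<omega> \<in> space M. Q' (\<lambda>p\<in>J0. V (h p) \<omega>)}
        = prob {\<omega> \<in> space M. (\<lambda>p\<in>J0. V (h p) \<omega>) \<in> {g \<in> space (PiM J0 (\<lambda>_. count_space UNIV)). Q' g}}"
      by (intro arg_cong[where f=prob]) (auto simp: space_PiM)
    also have "\<dots> = measure (PiM J0 (\<lambda>_. \<mu>)) {g \<in> space (PiM J0 (\<lambda>_. count_space UNIV)). Q' g}"
      by (rule law[OF fJ _ _ S]) (auto simp: inj_on_def h_def J0_def Aset_def I_def prod_eq_iff)
    also have "\<dots> = prob {\<omega> \<in> space M. (\<lambda>p\<in>J0. V p \<omega>) \<in> {g \<in> space (PiM J0 (\<lambda>_. count_space UNIV)). Q' g}}"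
      by (rule law[OF fJ _ _ S, of "\<lambda>p. p", symmetric]) (auto simp: J0_def Aset_def I_def)
    also have "\<dots> = q m"
    proof -
      have "Q' (\<lambda>p\<in>J0. V p \<omega>) = (\<forall>j\<in>{0<..m}. \<not> eqs (\<lambda>p. V p \<omega>) 0 j)" for \<omega>
        unfolding Q'_def by (intro ball_cong refl arg_cong[where f=Not] eqs_cong) (auto simp: J0_def Aset_def)
      then show ?thesis unfolding q_def by (intro arg_cong[where f=prob]) (auto simp: space_PiM)
    qed
    finally show ?thesis .
  qed
  show ?thesis by (simp only: e1 e2 e3 e4 e5)
qed

end

context rw
begin

lemma measX1: "k \<ge> 1 \<Longrightarrow> X1 k \<in> measurable M (count_space UNIV)"
  using measV[of "(True,k)"] by (simp add: V_def I_def)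

lemma mu_def': "\<mu> = distr M (count_space UNIV) (X1 1)" using d1[of 1] by simp

lemma prob_space_mu: "prob_space \<mu>"
  unfolding mu_def' by (rule prob_space_distr[OF measX1]) simp

lemma sets_mu: "sets \<mu> = UNIV" unfolding mu_def' by simp
lemma space_mu: "space \<mu> = UNIV" unfolding mu_def' by simp

lemma borel_mu: "g \<in> borel_measurable \<mu>"
  unfolding measurable_def using sets_mu space_mu by auto

lemma transfer_int: "k \<ge> 1 \<Longrightarrow> integrable M (\<lambda>\<omega>. g (X1 k \<omega>)) \<longleftrightarrow> integrable \<mu> (g :: _ \<Rightarrow> real)"
  using integrable_distr_eq[OF measX1 borel_measurable_count_space, of k g] d1[of k] by simp

lemma transfer_integral: "k \<ge> 1 \<Longrightarrow> integral\<^sup>L M (\<lambda>\<omega>. g (X1 k \<omega>)) = integral\<^sup>L \<mu> (g :: _ \<Rightarrow> real)"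
  using integral_distr[OF measX1 borel_measurable_count_space, of k g] d1[of k] by simp

lemma int_sq: "integrable \<mu> sqnorm2" using transfer_int[of 1 sqnorm2] int1 by simp

lemma sqnorm2_nonneg: "0 \<le> sqnorm2 z" by (simp add: sqnorm2_def)

lemma abs_le_sq: "\<bar>t::real\<bar> \<le> 1 + t^2"
proof -
  have "t^2 = \<bar>t\<bar>^2" by simp
  moreover have "0 \<le> (\<bar>t\<bar> - 1)^2" by simp
  ultimately show ?thesis by (simp add: power2_eq_square algebra_simps)
qed

lemma int_phi:
  assumes phib: "\<And>z. (real_of_int (\<phi> z))^2 \<le> sqnorm2 z"
  shows "integrable \<mu> (\<lambda>z. real_of_int (\<phi> z))"
proof (rule Bochner_Integration.integrable_bound)
  show "integrable \<mu> (\<lambda>z. 1 + sqnorm2 z)" using int_sq prob_space.finite_measure[OF prob_space_mu]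
    by (intro Bochner_Integration.integrable_add) (auto intro: finite_measure.integrable_const)
  show "(\<lambda>z. real_of_int (\<phi> z)) \<in> borel_measurable \<mu>" by (rule borel_mu)
  show "AE z in \<mu>. norm (real_of_int (\<phi> z)) \<le> norm (1 + sqnorm2 z)"
    using abs_le_sq phib sqnorm2_nonneg by (intro AE_I2) (smt (verit) real_norm_def)
qed

lemma int_phi2:
  assumes phib: "\<And>z. (real_of_int (\<phi> z))^2 \<le> sqnorm2 z"
  shows "integrable \<mu> (\<lambda>z. (real_of_int (\<phi> z) - c)^2)"
proof (rule Bochner_Integration.integrable_bound)
  show "integrable \<mu> (\<lambda>z. 2 * sqnorm2 z + 2 * c^2)" using int_sq prob_space.finite_measure[OF prob_space_mu]
    by (intro Bochner_Integration.integrable_add) (auto intro: finite_measure.integrable_const)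
  show "(\<lambda>z. (real_of_int (\<phi> z) - c)^2) \<in> borel_measurable \<mu>" by (rule borel_mu)
  have "(t - c)^2 \<le> 2 * t^2 + 2 * c^2" for t :: real
  proof -
    have "0 \<le> (t + c)^2" by simp
    then show ?thesis by (simp add: power2_eq_square algebra_simps)
  qed
  then show "AE z in \<mu>. norm ((real_of_int (\<phi> z) - c)^2) \<le> norm (2 * sqnorm2 z + 2 * c^2)"
    using phib sqnorm2_nonneg by (intro AE_I2) (smt (verit) real_norm_def zero_le_power2)
qed

lemma cheb:
  assumes phib: "\<And>z. (real_of_int (\<phi> z))^2 \<le> sqnorm2 z" and a: "a > 0"
  defines "c \<equiv> integral\<^sup>L \<mu> (\<lambda>z. real_of_int (\<phi> z))"
  defines "v \<equiv> integral\<^sup>L \<mu> (\<lambda>z. (real_of_int (\<phi> z) - c)^2)"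
  shows "prob {\<omega> \<in> space M. a \<le> \<bar>\<Sum>i\<in>{1..n}. (real_of_int (\<phi> (X1 i \<omega>)) - c)\<bar>} \<le> n * v / a^2"
proof -
  interpret mu: prob_space \<mu> by (rule prob_space_mu)
  define U where "U i \<omega> = real_of_int (\<phi> (X1 i \<omega>)) - c" for i \<omega>
  have mU: "U i \<in> borel_measurable M" if "i \<ge> 1" for i
    unfolding U_def by (rule measurable_compose[OF measX1[OF that] borel_measurable_count_space])
  have intU2: "integrable M (\<lambda>\<omega>. U i \<omega> * U i \<omega>)" if "i \<ge> 1" for i
    using transfer_int[OF that, of "\<lambda>z. (real_of_int (\<phi> z) - c)^2"] int_phi2[OF phib, of c]
    by (simp add: U_def power2_eq_square)
  have intU: "integrable M (U i)" if "i \<ge> 1" for i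
  proof -
    have "integrable \<mu> (\<lambda>z. real_of_int (\<phi> z) - c)"
      using int_phi[OF phib] by (intro Bochner_Integration.integrable_diff) (auto intro: mu.integrable_const)
    moreover have "U i = (\<lambda>\<omega>. real_of_int (\<phi> (X1 i \<omega>)) - c)" by (simp add: U_def fun_eq_iff)
    ultimately show ?thesis using transfer_int[OF that, of "\<lambda>z. real_of_int (\<phi> z) - c"] by simp
  qed
  have EU: "integral\<^sup>L M (U i) = 0" if "i \<ge> 1" for i
  proof -
    have "integral\<^sup>L M (U i) = integral\<^sup>L \<mu> (\<lambda>z. real_of_int (\<phi> z) - c)"
      unfolding U_def by (rule transfer_integral[OF that])
    also have "\<dots> = c - c" using int_phi[OF phib] by (simp add: c_def mu.prob_space)
    finally show ?thesis by simp
  qed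
  have EU2: "integral\<^sup>L M (\<lambda>\<omega>. U i \<omega> * U i \<omega>) = v" if "i \<ge> 1" for i
    using transfer_integral[OF that, of "\<lambda>z. (real_of_int (\<phi> z) - c)^2"]
    by (simp add: U_def v_def power2_eq_square)
  have indU: "indep_var borel (U i) borel (U j)" if "i \<ge> 1" "j \<ge> 1" "i \<noteq> j" for i j
  proof -
    have "indep_vars (\<lambda>_. count_space UNIV) (\<lambda>b. V (if b then (True, i) else (True, j))) UNIV"
      by (rule reindex_indep) (use that in \<open>auto simp: inj_on_def I_def split: if_splits\<close>)
    then have "indep_vars (\<lambda>_. borel) (\<lambda>b \<omega>. (\<lambda>z. real_of_int (\<phi> z) - c) (V (if b then (True, i) else (True, j)) \<omega>)) UNIV"
      by (rule indep_vars_compose2) (rule borel_measurable_count_space)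
    then show ?thesis unfolding indep_var_def
      by (rule indep_vars_cong[THEN iffD1, rotated -1]) (auto simp: U_def V_def split: bool.split)
  qed
  have intUU: "integrable M (\<lambda>\<omega>. U i \<omega> * U j \<omega>)" if "i \<ge> 1" "j \<ge> 1" for i j
  proof (cases "i = j")
    case True then show ?thesis using intU2 that by simp
  next
    case False then show ?thesis using indep_var_integrable[OF indU[OF that False] intU intU] that by simp
  qed
  have EUU: "integral\<^sup>L M (\<lambda>\<omega>. U i \<omega> * U j \<omega>) = (if i = j then v else 0)" if "i \<ge> 1" "j \<ge> 1" for i j
  proof (cases "i = j")
    case True then show ?thesis using EU2 that by simp
  next
    case False then show ?thesis using indep_var_lebesgue_integral[OF indU[OF that False] intU intU] that EU by simp
  qed
  define f where "f \<omega> = (\<Sum>i\<in>{1..n}. U i \<omega>)" for \<omega>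
  have sq: "f \<omega> ^ 2 = (\<Sum>i\<in>{1..n}. \<Sum>j\<in>{1..n}. U i \<omega> * U j \<omega>)" for \<omega>
    unfolding f_def power2_eq_square sum_product ..
  have mf: "f \<in> borel_measurable M" unfolding f_def using mU by (intro borel_measurable_sum) auto
  have intf: "integrable M (\<lambda>\<omega>. f \<omega> ^ 2)" unfolding sq using intUU by (intro Bochner_Integration.integrable_sum) auto
  have Ef: "integral\<^sup>L M (\<lambda>\<omega>. f \<omega> ^ 2) = n * v"
  proof -
    have "integral\<^sup>L M (\<lambda>\<omega>. f \<omega> ^ 2) = (\<Sum>i\<in>{1..n}. \<Sum>j\<in>{1..n}. integral\<^sup>L M (\<lambda>\<omega>. U i \<omega> * U j \<omega>))"
      unfolding sq using intUU
      by (subst Bochner_Integration.integral_sum) (auto intro!: sum.cong Bochner_Integration.integral_sum Bochner_Integration.integrable_sum)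
    also have "\<dots> = (\<Sum>i\<in>{1..n}. \<Sum>j\<in>{1..n}. (if i = j then v else 0))"
      using EUU by (intro sum.cong refl) auto
    also have "\<dots> = n * v" by simp
    finally show ?thesis .
  qed
  have P: "prob {\<omega> \<in> space M. \<bar>f \<omega>\<bar> \<ge> a} \<le> integral\<^sup>L M (\<lambda>\<omega>. f \<omega> ^ 2) / a\<^sup>2"
    by (rule second_moment_method[OF mf intf a])
  have T: "{\<omega> \<in> space M. a \<le> \<bar>\<Sum>i\<in>{1..n}. (real_of_int (\<phi> (X1 i \<omega>)) - c)\<bar>} = {\<omega> \<in> space M. \<bar>f \<omega>\<bar> \<ge> a}"
    by (simp add: f_def U_def)
  show ?thesis using P unfolding T Ef .
qed


definition wv :: "nat \<Rightarrow> (nat \<Rightarrow> int \<times> int) \<Rightarrow> int \<times> int" where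
  "wv n g = (fst x + (\<Sum>i\<in>{1..n}. fst (g i)), snd x + (\<Sum>i\<in>{1..n}. snd (g i)))"

lemma wv_cong:
  assumes "\<And>i. 1 \<le> i \<Longrightarrow> i \<le> n \<Longrightarrow> g i = g' i" shows "wv n g = wv n g'"
proof -
  have h: "(\<Sum>i\<in>{1..n}. \<phi> (g i)) = (\<Sum>i\<in>{1..n}. \<phi> (g' i))" for \<phi> :: "int \<times> int \<Rightarrow> int"
    using assms by (intro sum.cong) auto
  show ?thesis unfolding wv_def using h[of fst] h[of snd] by simp
qed

lemma walk_wv1: "walk x X1 n \<omega> = wv n (\<lambda>i. V (True, i) \<omega>)"
  by (simp add: walk_def wv_def V_def)
lemma walk_wv2: "walk x X2 n \<omega> = wv n (\<lambda>i. V (False, i) \<omega>)"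
  by (simp add: walk_def wv_def V_def)

lemma ev_walk: "{\<omega> \<in> space M. R (walk x X1 n \<omega>) (walk x X2 n \<omega>)} \<in> events"
  unfolding walk_wv1 walk_wv2
proof (rule ev_sets_eqs[of n])
  fix f g :: "bool \<times> nat \<Rightarrow> int \<times> int" assume fg: "\<And>p. p \<in> Aset n \<Longrightarrow> f p = g p"
  have "wv n (\<lambda>i. f (b, i)) = wv n (\<lambda>i. g (b, i))" for b by (rule wv_cong) (auto intro!: fg simp: Aset_def)
  then show "R (wv n (\<lambda>i. f (True, i))) (wv n (\<lambda>i. f (False, i))) = R (wv n (\<lambda>i. g (True, i))) (wv n (\<lambda>i. g (False, i)))"
    by simp
qed

lemma same_law:
  assumes "n \<ge> 1"
  shows "prob {\<omega> \<in> space M. walk x X2 n \<omega> = z} = prob {\<omega> \<in> space M. walk x X1 n \<omega> = z}"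
proof -
  define J where "J = {1..n}"
  define S where "S = {g \<in> space (PiM J (\<lambda>_. count_space UNIV)). wv n g = z}"
  have fJ: "finite J" "J \<noteq> {}" using assms by (auto simp: J_def)
  have S: "S \<subseteq> space (PiM J (\<lambda>_. count_space UNIV))" by (auto simp: S_def)
  have eq: "{\<omega> \<in> space M. walk x (if b then X1 else X2) n \<omega> = z} = {\<omega> \<in> space M. (\<lambda>i\<in>J. V (b, i) \<omega>) \<in> S}" for b
  proof -
    have "wv n (\<lambda>i\<in>J. V (b, i) \<omega>) = wv n (\<lambda>i. V (b, i) \<omega>)" for \<omega> by (rule wv_cong) (auto simp: J_def)
    moreover have "walk x (if b then X1 else X2) n \<omega> = wv n (\<lambda>i. V (b, i) \<omega>)" for \<omega>
      by (cases b) (simp_all add: walk_wv1 walk_wv2)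
    ultimately show ?thesis by (auto simp: S_def space_PiM)
  qed
  have l: "prob {\<omega> \<in> space M. (\<lambda>i\<in>J. V (b, i) \<omega>) \<in> S} = measure (PiM J (\<lambda>_. \<mu>)) S" for b
    by (rule law[OF fJ _ _ S]) (auto simp: inj_on_def J_def I_def)
  show ?thesis using eq[of False] eq[of True] l[of False] l[of True] by simp
qed

lemma prod_eq:
  "prob {\<omega> \<in> space M. walk x X1 n \<omega> = z \<and> walk x X2 n \<omega> = z}
    = prob {\<omega> \<in> space M. walk x X1 n \<omega> = z} * prob {\<omega> \<in> space M. walk x X2 n \<omega> = z}"
proof -
  define A :: "(bool \<times> nat) set" where "A = {p. fst p \<and> 0 < snd p \<and> snd p \<le> n}"
  define B :: "(bool \<times> nat) set" where "B = {p. \<not> fst p \<and> 0 < snd p \<and> snd p \<le> n}"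
  have fA: "finite A" by (rule finite_subset[of _ "UNIV \<times> {..n}"]) (auto simp: A_def)
  have fB: "finite B" by (rule finite_subset[of _ "UNIV \<times> {..n}"]) (auto simp: B_def)
  have dis: "A \<inter> B = {}" "A \<subseteq> I" "B \<subseteq> I" by (auto simp: A_def B_def I_def)
  have r1: "wv n (\<lambda>i. (\<lambda>p\<in>A. V p \<omega>) (True, i)) = walk x X1 n \<omega>" for \<omega>
    unfolding walk_wv1 by (rule wv_cong) (auto simp: A_def)
  have r2: "wv n (\<lambda>i. (\<lambda>p\<in>B. V p \<omega>) (False, i)) = walk x X2 n \<omega>" for \<omega>
    unfolding walk_wv2 by (rule wv_cong) (auto simp: B_def)
  have "prob {\<omega> \<in> space M. wv n (\<lambda>i. (\<lambda>p\<in>A. V p \<omega>) (True, i)) = z \<and> wv n (\<lambda>i. (\<lambda>p\<in>B. V p \<omega>) (False, i)) = z}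
     = prob {\<omega> \<in> space M. wv n (\<lambda>i. (\<lambda>p\<in>A. V p \<omega>) (True, i)) = z} * prob {\<omega> \<in> space M. wv n (\<lambda>i. (\<lambda>p\<in>B. V p \<omega>) (False, i)) = z}"
    by (rule ind_events[OF fA fB dis])
  then show ?thesis by (simp only: r1 r2)
qed

lemma lower:
  assumes n: "n \<ge> 1" and fin: "finite Bx"
  shows "(prob {\<omega> \<in> space M. walk x X1 n \<omega> \<in> Bx})^2 / card Bx \<le> prob (Ev n)"
proof -
  let ?p = "\<lambda>z. prob {\<omega> \<in> space M. walk x X1 n \<omega> = z}"
  have un1: "{\<omega> \<in> space M. walk x X1 n \<omega> \<in> Bx} = (\<Union>z\<in>Bx. {\<omega> \<in> space M. walk x X1 n \<omega> = z})" by auto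
  have "prob {\<omega> \<in> space M. walk x X1 n \<omega> \<in> Bx} = (\<Sum>z\<in>Bx. ?p z)"
    unfolding un1 by (rule measure_finite_Union[OF fin]) (auto simp: disjoint_family_on_def intro: ev_walk)
  moreover have "(\<Sum>z\<in>Bx. ?p z)^2 \<le> (\<Sum>z\<in>Bx. (?p z)^2) * card Bx" by (rule sum_squared_le_sum_of_squares)
  moreover have "(\<Sum>z\<in>Bx. (?p z)^2) \<le> prob (Ev n)"
  proof -
    have "(\<Sum>z\<in>Bx. (?p z)^2) = (\<Sum>z\<in>Bx. prob {\<omega> \<in> space M. walk x X1 n \<omega> = z \<and> walk x X2 n \<omega> = z})"
      by (intro sum.cong refl) (simp add: prod_eq same_law[OF n] power2_eq_square)
    also have "\<dots> = prob (\<Union>z\<in>Bx. {\<omega> \<in> space M. walk x X1 n \<omega> = z \<and> walk x X2 n \<omega> = z})"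
      by (rule measure_finite_Union[OF fin, symmetric]) (auto simp: disjoint_family_on_def intro: ev_walk)
    also have "\<dots> \<le> prob (Ev n)"
      by (rule finite_measure_mono[OF _ Ev_sets]) (auto simp: Ev_def walk_eqs[symmetric])
    finally show ?thesis .
  qed
  ultimately show ?thesis
  proof (cases "card Bx = 0")
    case True then show ?thesis by simp
  next
    case False
    assume a1: "prob {\<omega> \<in> space M. walk x X1 n \<omega> \<in> Bx} = (\<Sum>z\<in>Bx. ?p z)"
      and a2: "(\<Sum>z\<in>Bx. ?p z)^2 \<le> (\<Sum>z\<in>Bx. (?p z)^2) * card Bx"
      and a3: "(\<Sum>z\<in>Bx. (?p z)^2) \<le> prob (Ev n)"
    have "(\<Sum>z\<in>Bx. ?p z)^2 / card Bx \<le> (\<Sum>z\<in>Bx. (?p z)^2)"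
      using a2 False by (simp add: divide_le_eq)
    then show ?thesis using a1 a3 by simp
  qed
qed

lemma card_int_ivl: assumes "a \<ge> 0" shows "real (card {\<lceil>p - a\<rceil>..\<lfloor>p + a\<rfloor>}) \<le> 2 * a + 1"
proof (cases "\<lfloor>p + a\<rfloor> - \<lceil>p - a\<rceil> + 1 \<le> 0")
  case True then show ?thesis using assms by simp
next
  case False
  then have "real (card {\<lceil>p - a\<rceil>..\<lfloor>p + a\<rfloor>}) = real_of_int (\<lfloor>p + a\<rfloor> - \<lceil>p - a\<rceil> + 1)" by simp
  also have "\<dots> \<le> (p + a) - (p - a) + 1" using of_int_floor_le[of "p + a"] le_of_int_ceiling[of "p - a"] by linarith
  finally show ?thesis by simp
qed


lemma D1: "\<exists>c>0. \<forall>n\<ge>1. c / real n \<le> prob (Ev n)"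
proof -
  define c1 where "c1 = integral\<^sup>L \<mu> (\<lambda>z. real_of_int (fst z))"
  define c2 where "c2 = integral\<^sup>L \<mu> (\<lambda>z. real_of_int (snd z))"
  define v1 where "v1 = integral\<^sup>L \<mu> (\<lambda>z. (real_of_int (fst z) - c1)^2)"
  define v2 where "v2 = integral\<^sup>L \<mu> (\<lambda>z. (real_of_int (snd z) - c2)^2)"
  have v1pos: "0 \<le> v1" unfolding v1_def by (rule Bochner_Integration.integral_nonneg) simp
  have v2pos: "0 \<le> v2" unfolding v2_def by (rule Bochner_Integration.integral_nonneg) simp
  define s where "s = sqrt (4 * (v1 + v2 + 1))"
  have spos: "s > 0" using v1pos v2pos by (simp add: s_def)
  have s2: "s^2 = 4 * (v1 + v2 + 1)" using v1pos v2pos by (simp add: s_def)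
  define K where "K = (2 * s + 1)^2"
  have Kpos: "K > 0" using spos by (simp add: K_def)
  show ?thesis
  proof (intro exI[of _ "1 / (4 * K)"] conjI allI impI)
    show "0 < 1 / (4 * K)" using Kpos by simp
    fix n :: nat assume n: "1 \<le> n"
    define a where "a = sqrt (real n) * s"
    have apos: "a > 0" using n spos by (simp add: a_def)
    have a2: "a^2 = real n * (4 * (v1 + v2 + 1))" using s2 by (simp add: a_def power_mult_distrib)
    define p1 where "p1 = real_of_int (fst x) + real n * c1"
    define p2 where "p2 = real_of_int (snd x) + real n * c2"
    define Bx where "Bx = {z. \<bar>real_of_int (fst z) - p1\<bar> < a \<and> \<bar>real_of_int (snd z) - p2\<bar> < a}"
    have sub: "Bx \<subseteq> {\<lceil>p1 - a\<rceil>..\<lfloor>p1 + a\<rfloor>} \<times> {\<lceil>p2 - a\<rceil>..\<lfloor>p2 + a\<rfloor>}"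
      by (auto simp: Bx_def ceiling_le_iff le_floor_iff abs_less_iff)
    have finB: "finite Bx" using sub by (rule finite_subset) simp
    have cardB: "real (card Bx) \<le> K * real n"
    proof -
      have "card Bx \<le> card ({\<lceil>p1 - a\<rceil>..\<lfloor>p1 + a\<rfloor>} \<times> {\<lceil>p2 - a\<rceil>..\<lfloor>p2 + a\<rfloor>})"
        using sub by (rule card_mono[rotated]) simp
      then have "real (card Bx) \<le> real (card {\<lceil>p1 - a\<rceil>..\<lfloor>p1 + a\<rfloor>} * card {\<lceil>p2 - a\<rceil>..\<lfloor>p2 + a\<rfloor>})"
        by (simp only: card_cartesian_product of_nat_le_iff)
      then have "real (card Bx) \<le> real (card {\<lceil>p1 - a\<rceil>..\<lfloor>p1 + a\<rfloor>}) * real (card {\<lceil>p2 - a\<rceil>..\<lfloor>p2 + a\<rfloor>})"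
        by (simp only: of_nat_mult)
      also have "\<dots> \<le> (2 * a + 1) * (2 * a + 1)"
        using apos by (intro mult_mono card_int_ivl) auto
      also have "\<dots> \<le> K * real n"
      proof -
        have sq1: "1 \<le> sqrt (real n)" using n by simp
        have "2 * a + 1 \<le> sqrt (real n) * (2 * s + 1)" using sq1 spos by (simp add: a_def algebra_simps)
        then have "(2 * a + 1) * (2 * a + 1) \<le> (sqrt (real n) * (2 * s + 1)) * (sqrt (real n) * (2 * s + 1))"
          using apos by (intro mult_mono) auto
        also have "\<dots> = K * real n" by (simp add: K_def power2_eq_square algebra_simps)
        finally show ?thesis .
      qed
      finally show ?thesis .
    qed
    define F1 where "F1 \<omega> = (\<Sum>i\<in>{1..n}. (real_of_int (fst (X1 i \<omega>)) - c1))" for \<omega>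
    define F2 where "F2 \<omega> = (\<Sum>i\<in>{1..n}. (real_of_int (snd (X1 i \<omega>)) - c2))" for \<omega>
    have mF1[measurable]: "F1 \<in> borel_measurable M" unfolding F1_def
      by (intro borel_measurable_sum measurable_compose[OF measX1 borel_measurable_count_space, where g="\<lambda>z. real_of_int (fst z) - c1"]) auto
    have mF2[measurable]: "F2 \<in> borel_measurable M" unfolding F2_def
      by (intro borel_measurable_sum measurable_compose[OF measX1 borel_measurable_count_space, where g="\<lambda>z. real_of_int (snd z) - c2"]) auto
    define C1 where "C1 = {\<omega> \<in> space M. a \<le> \<bar>F1 \<omega>\<bar>}"
    define C2 where "C2 = {\<omega> \<in> space M. a \<le> \<bar>F2 \<omega>\<bar>}"
    have C1s: "C1 \<in> events" unfolding C1_def by measurable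
    have C2s: "C2 \<in> events" unfolding C2_def by measurable
    have pC1: "prob C1 \<le> real n * v1 / a^2" unfolding C1_def F1_def c1_def v1_def
      by (rule cheb) (simp_all add: sqnorm2_def apos)
    have pC2: "prob C2 \<le> real n * v2 / a^2" unfolding C2_def F2_def c2_def v2_def
      by (rule cheb) (simp_all add: sqnorm2_def apos)
    have "real n * v1 / a^2 + real n * v2 / a^2 = (v1 + v2) / (4 * (v1 + v2 + 1))"
    proof -
      have np: "real n \<noteq> 0" using n by simp
      have "real n * v1 / a^2 = v1 / (4 * (v1 + v2 + 1))" "real n * v2 / a^2 = v2 / (4 * (v1 + v2 + 1))"
        unfolding a2 using np by (simp_all add: mult_divide_mult_cancel_left del: times_divide_eq_left times_divide_eq_right)
      then show ?thesis by (simp add: add_divide_distrib)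
    qed
    also have "\<dots> \<le> 1 / 4" using v1pos v2pos by (simp add: field_simps)
    finally have pC: "prob C1 + prob C2 \<le> 1 / 4" using pC1 pC2 by linarith
    define W where "W = {\<omega> \<in> space M. walk x X1 n \<omega> \<in> Bx}"
    have Ws: "W \<in> events" unfolding W_def using ev_walk[of "\<lambda>u v. u \<in> Bx" n] by simp
    have id1: "real_of_int (fst (walk x X1 n \<omega>)) - p1 = F1 \<omega>" for \<omega>
      by (simp add: walk_def p1_def F1_def of_int_sum sum_subtractf)
    have id2: "real_of_int (snd (walk x X1 n \<omega>)) - p2 = F2 \<omega>" for \<omega>
      by (simp add: walk_def p2_def F2_def of_int_sum sum_subtractf)
    have cov: "space M \<subseteq> W \<union> C1 \<union> C2"
      by (auto simp: W_def C1_def C2_def Bx_def id1 id2 not_le)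
    have "1 = prob (space M)" by (simp add: prob_space)
    also have "\<dots> \<le> prob (W \<union> C1 \<union> C2)"
      using cov Ws C1s C2s by (intro finite_measure_mono) auto
    also have "\<dots> \<le> prob (W \<union> C1) + prob C2"
      using Ws C1s C2s by (intro measure_Un_le) auto
    also have "\<dots> \<le> prob W + prob C1 + prob C2"
      using Ws C1s C2s measure_Un_le[of W M C1] by auto
    finally have PW: "3 / 4 \<le> prob W" using pC by linarith
    have cpos: "0 < card Bx"
    proof (rule ccontr)
      assume "\<not> 0 < card Bx"
      then have "Bx = {}" using finB by simp
      then have "W = {}" by (simp add: W_def)
      then show False using PW by simp
    qed
    have "(1 / 4) / (K * real n) \<le> (prob W)^2 / real (card Bx)"
    proof (rule frac_le)
      show "0 \<le> (prob W)^2" by simp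
      have "1 / 2 \<le> prob W" using PW by simp
      then have "(1/2)^2 \<le> (prob W)^2" by (rule power_mono) simp
      then show "1 / 4 \<le> (prob W)^2" by (simp add: power2_eq_square)
      show "0 < real (card Bx)" using cpos by simp
      show "real (card Bx) \<le> K * real n" by (rule cardB)
    qed
    also have "\<dots> \<le> prob (Ev n)" unfolding W_def by (rule lower[OF n finB])
    finally show "1 / (4 * K) / real n \<le> prob (Ev n)" by (simp add: field_simps)
  qed
qed

lemma diverge: "\<exists>N. B < (\<Sum>k\<le>N. prob (Ev k))"
proof -
  obtain c where c: "c > 0" "\<And>n. n \<ge> 1 \<Longrightarrow> c / real n \<le> prob (Ev n)" using D1 by blast
  define N where "N = nat \<lceil>exp (B / c)\<rceil>"
  have "exp (B / c) \<le> real N" unfolding N_def by (rule real_nat_ceiling_ge)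
  then have "exp (B / c) < real N + 1" by simp
  then have "ln (exp (B / c)) < ln (real N + 1)" by (intro ln_less_cancel_iff[THEN iffD2]) auto
  then have "B / c < ln (real N + 1)" by simp
  also have "\<dots> \<le> harm N" by (rule ln_le_harm)
  finally have "B < c * harm N" using c(1) by (simp add: field_simps)
  also have "c * harm N = (\<Sum>k=1..N. c / real k)"
    by (simp add: harm_def sum_distrib_left divide_inverse)
  also have "\<dots> \<le> (\<Sum>k=1..N. prob (Ev k))" by (intro sum_mono c(2)) auto
  also have "\<dots> \<le> (\<Sum>k\<le>N. prob (Ev k))" by (intro sum_mono2) auto
  finally show ?thesis by blast
qed

end

context rw
begin

lemma Fk_sets: "{\<omega> \<in> space M. P (\<lambda>p. V p \<omega>)} \<in> events"
  if "\<And>f g. (\<And>p. p \<in> Aset n \<Longrightarrow> f p = g p) \<Longrightarrow> P f = P g" for P n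
  using ev_sets_eqs that by blast

lemma qlim: assumes "\<epsilon> > 0" shows "\<exists>m. q m < \<epsilon>"
proof (rule ccontr)
  assume "\<not> ?thesis"
  then have qe: "\<And>m. \<epsilon> \<le> q m" by (simp add: not_less)
  obtain N where N: "1 / \<epsilon> < (\<Sum>k\<le>N. prob (Ev k))" using diverge by blast
  define F where "F k = {\<omega> \<in> space M. eqs (\<lambda>p. V p \<omega>) 0 k \<and> (\<forall>j\<in>{k<..N}. \<not> eqs (\<lambda>p. V p \<omega>) 0 j)}" for k
  have Fsets: "F k \<in> events" if "k \<le> N" for k
    unfolding F_def
  proof (rule Fk_sets[of N])
    fix f g :: "bool \<times> nat \<Rightarrow> int \<times> int" assume fg: "\<And>p. p \<in> Aset N \<Longrightarrow> f p = g p"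
    have "j \<le> N \<Longrightarrow> eqs f 0 j = eqs g 0 j" for j by (rule eqs_cong) (auto intro!: fg simp: Aset_def)
    then show "(eqs f 0 k \<and> (\<forall>j\<in>{k<..N}. \<not> eqs f 0 j)) = (eqs g 0 k \<and> (\<forall>j\<in>{k<..N}. \<not> eqs g 0 j))"
      using that by auto
  qed
  have Fprob: "prob (F k) = prob (Ev k) * q (N - k)" if "k \<le> N" for k
  proof -
    have kN: "k + (N - k) = N" using that by simp
    have pt: "(eqs f 0 k \<and> (\<forall>j\<in>{k<..N}. \<not> eqs f 0 j)) = (eqs f 0 k \<and> (\<forall>j\<in>{k<..N}. \<not> eqs f k j))" for f
    proof (cases "eqs f 0 k")
      case True
      have "eqs f 0 j = eqs f k j" if "j \<in> {k<..N}" for j using eqs_trans[of 0 k j f] True that by simp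
      then show ?thesis by (simp add: True)
    qed simp
    have "F k = {\<omega> \<in> space M. eqs (\<lambda>p. V p \<omega>) 0 k \<and> (\<forall>j\<in>{k<..k+(N-k)}. \<not> eqs (\<lambda>p. V p \<omega>) k j)}"
      unfolding F_def kN pt ..
    then show ?thesis using F1 by simp
  qed
  have disj: "disjoint_family_on F {..N}"
    unfolding disjoint_family_on_def F_def
  proof (intro ballI impI)
    fix a b assume "a \<in> {..N}" "b \<in> {..N}" "a \<noteq> b"
    then show "{\<omega> \<in> space M. eqs (\<lambda>p. V p \<omega>) 0 a \<and> (\<forall>j\<in>{a<..N}. \<not> eqs (\<lambda>p. V p \<omega>) 0 j)} \<inter>
               {\<omega> \<in> space M. eqs (\<lambda>p. V p \<omega>) 0 b \<and> (\<forall>j\<in>{b<..N}. \<not> eqs (\<lambda>p. V p \<omega>) 0 j)} = {}"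
      by (cases "a < b") auto
  qed
  have "(\<Sum>k\<le>N. prob (F k)) = prob (\<Union>k\<in>{..N}. F k)"
    by (rule measure_finite_Union[symmetric]) (use Fsets disj in auto)
  also have "\<dots> \<le> 1" by (rule prob_le_1)
  finally have s1: "(\<Sum>k\<le>N. prob (F k)) \<le> 1" .
  have "\<epsilon> * (\<Sum>k\<le>N. prob (Ev k)) = (\<Sum>k\<le>N. prob (Ev k) * \<epsilon>)" by (simp add: sum_distrib_left mult.commute)
  also have "\<dots> \<le> (\<Sum>k\<le>N. prob (F k))"
    by (intro sum_mono) (simp add: Fprob qe mult_left_mono)
  finally have "\<epsilon> * (\<Sum>k\<le>N. prob (Ev k)) \<le> 1" using s1 by linarith
  moreover have "1 < \<epsilon> * (\<Sum>k\<le>N. prob (Ev k))" using N assms by (simp add: field_simps)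
  ultimately show False by linarith
qed

lemma main_AE: "AE \<omega> in M. infinite {n. walk x X1 n \<omega> = walk x X2 n \<omega>}"
proof -
  define L where "L k = {\<omega> \<in> space M. eqs (\<lambda>p. V p \<omega>) 0 k \<and> (\<forall>j>k. \<not> eqs (\<lambda>p. V p \<omega>) 0 j)}" for k
  have Lsets: "L k \<in> events" for k
  proof -
    have "L k = Ev k - (\<Union>j\<in>{k<..}. Ev j)" by (auto simp: L_def Ev_def)
    also have "\<dots> \<in> events" using Ev_sets by (intro sets.Diff sets.countable_UN'') auto
    finally show ?thesis .
  qed
  have Lnull: "L k \<in> null_sets M" for k
  proof -
    have le: "prob (L k) \<le> q m" for m
    proof -
      define G where "G = {\<omega> \<in> space M. eqs (\<lambda>p. V p \<omega>) 0 k \<and> (\<forall>j\<in>{k<..k+m}. \<not> eqs (\<lambda>p. V p \<omega>) k j)}"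
      have Gs: "G \<in> events" unfolding G_def
      proof (rule Fk_sets[of "k+m"])
        fix f g :: "bool \<times> nat \<Rightarrow> int \<times> int" assume fg: "\<And>p. p \<in> Aset (k+m) \<Longrightarrow> f p = g p"
        have "j \<le> k + m \<Longrightarrow> eqs f a j = eqs g a j" for a j by (rule eqs_cong) (auto intro!: fg simp: Aset_def)
        then show "(eqs f 0 k \<and> (\<forall>j\<in>{k<..k+m}. \<not> eqs f k j)) = (eqs g 0 k \<and> (\<forall>j\<in>{k<..k+m}. \<not> eqs g k j))"
          by auto
      qed
      have "L k \<subseteq> G" unfolding L_def G_def using eqs_trans[of 0 k _ "\<lambda>p. V p _"] by auto
      then have "prob (L k) \<le> prob G" using Gs by (rule finite_measure_mono)
      also have "\<dots> = prob (Ev k) * q m" unfolding G_def by (rule F1)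
      also have "\<dots> \<le> q m" using prob_le_1[of "Ev k"] by (simp add: q_def mult_left_le_one_le)
      finally show ?thesis .
    qed
    have "prob (L k) \<le> 0"
    proof (rule field_le_epsilon)
      fix e :: real assume "0 < e"
      then obtain m where "q m < e" using qlim by blast
      then show "prob (L k) \<le> 0 + e" using le[of m] by simp
    qed
    then have "prob (L k) = 0" by (simp add: measure_le_0_iff)
    then show ?thesis using Lsets by (simp add: emeasure_eq_measure null_setsI)
  qed
  show ?thesis
  proof (rule AE_I')
    show "(\<Union>k. L k) \<in> null_sets M" using Lnull by blast
    show "{\<omega> \<in> space M. \<not> infinite {n. walk x X1 n \<omega> = walk x X2 n \<omega>}} \<subseteq> (\<Union>k. L k)"
    proof
      fix \<omega> assume "\<omega> \<in> {\<omega> \<in> space M. \<not> infinite {n. walk x X1 n \<omega> = walk x X2 n \<omega>}}"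
      then have sp: "\<omega> \<in> space M" and fin: "finite {n. walk x X1 n \<omega> = walk x X2 n \<omega>}" by auto
      let ?S = "{n. walk x X1 n \<omega> = walk x X2 n \<omega>}"
      have "0 \<in> ?S" by (simp add: walk_def)
      then have ne: "?S \<noteq> {}" by blast
      have m1: "Max ?S \<in> ?S" using Max_in[OF fin ne] .
      have m2: "j \<notin> ?S" if "j > Max ?S" for j
      proof
        assume "j \<in> ?S"
        then have "j \<le> Max ?S" by (rule Max_ge[OF fin])
        then show False using that by simp
      qed
      have e1: "eqs (\<lambda>p. V p \<omega>) 0 (Max ?S)" using m1 by (simp add: walk_eqs)
      have e2: "\<forall>j>Max ?S. \<not> eqs (\<lambda>p. V p \<omega>) 0 j" using m2 by (simp add: walk_eqs)
      have "\<omega> \<in> L (Max ?S)" unfolding L_def using sp e1 e2 by blast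
      then show "\<omega> \<in> (\<Union>k. L k)" by blast
    qed
  qed
qed

end

theorem mainTheorem1:
  fixes M :: "'a measure"
    and x :: "int \<times> int"
    and X1 X2 :: "nat \<Rightarrow> 'a \<Rightarrow> int \<times> int"
    and \<mu> :: "(int \<times> int) measure"
  assumes "prob_space M"
    and "prob_space.indep_vars M (\<lambda>_. count_space UNIV)
           (\<lambda>(b, k). if b then X1 k else X2 k) {(b, k). k \<ge> 1}"
    and "\<And>k. k \<ge> 1 \<Longrightarrow> distr M (count_space UNIV) (X1 k) = \<mu>"
    and "\<And>k. k \<ge> 1 \<Longrightarrow> distr M (count_space UNIV) (X2 k) = \<mu>"
    and "integrable M (\<lambda>\<omega>. sqnorm2 (X1 1 \<omega>))"
  shows "AE \<omega> in M. infinite {n. walk x X1 n \<omega> = walk x X2 n \<omega>}"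
proof -
  interpret rw M x X1 X2 \<mu> unfolding rw_def rw_axioms_def using assms by auto
  show ?thesis by (rule main_AE)
qed

end
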